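(* Let $\mathcal{R}$ be a finite ring with $q$ elements, $\mathcal{R}^- = \mathcal{R}\setminus\{0\}$, and let $\Gamma$ be a finite index set with $|\Gamma| = N$. Let $M \in \mathbb{N}$ and let $\mathbf{k} = (k_\alpha)_{\alpha\in\mathcal{R}^-} \in \mathbb{N}^{q-1}$ satisfy $\sum_{\alpha\in\mathcal{R}^-} \alpha\cdot k_\alpha = 0$ in $\mathcal{R}$ and $\sum_{\alpha\in\mathcal{R}^-} k_\alpha \le N$. Suppose that for each $\alpha\in\mathcal{R}^-$ we are given nonnegative integers $x_i^{(\alpha)}$, $i \in \Gamma$, such that $$\sum_{i\in\Gamma} x_i^{(\alpha)} = k_\alpha M \quad\text{for all } \alpha\in\mathcal{R}^-,\qquad \sum_{\alpha\in\mathcal{R}^-} x_i^{(\alpha)} \le M \quad\text{for all } i\in\Gamma.$$ Then there exist nonnegative integers $\{w_{\mathbf{a}} : \mathbf{a}\in\mathcal{C}_\Gamma^{(\mathbf{k})}\}$ such that (1) $\sum_{\mathbf{a}\in\mathcal{C}_\Gamma^{(\mathbf{k})}} w_{\mathbf{a}} = M$, and (2) for all $\alpha\in\mathcal{R}^-$ and all $i\in\Gamma$, $x_i^{(\alpha)} = \sum_{\mathbf{a}\in\mathcal{C}_\Gamma^{(\mathbf{k})},\, a_i=\alpha} w_{\mathbf{a}}$.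
   Context: For $k\in\mathbb{N}$ and $\alpha\in\mathcal{R}$, $\alpha\cdot k$ denotes $0$ if $k=0$ and the sum $\alpha+\cdots+\alpha$ ($k$ terms) if $k>0$. The single parity check code indexed by $\Gamma$ is $\mathcal{C}_\Gamma = \{\mathbf{a}=(a_i)_{i\in\Gamma}\in\mathcal{R}^N : \sum_{i\in\Gamma} a_i = 0\}$. The map $\boldsymbol{\kappa}_\Gamma:\mathcal{C}_\Gamma\to\mathbb{N}^{q-1}$ is given by $(\boldsymbol{\kappa}_\Gamma(\mathbf{a}))_\alpha = |\{i\in\Gamma : a_i=\alpha\}|$ for $\alpha\in\mathcal{R}^-$, and $\mathcal{C}_\Gamma^{(\mathbf{k})} = \{\mathbf{a}\in\mathcal{C}_\Gamma : \boldsymbol{\kappa}_\Gamma(\mathbf{a}) = \mathbf{k}\}$. *)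

theory Defs
  imports Main
begin

definition rmul :: "'r::ring \<Rightarrow> nat \<Rightarrow> 'r" where
  "rmul \<alpha> k = (\<Sum>j<k. \<alpha>)"

(* Words over R indexed by Gamma, represented as functions that are 0 outside Gamma *)
definition spc_code :: "'i set \<Rightarrow> ('i \<Rightarrow> 'r::ring) set" where
  "spc_code \<Gamma> = {a. (\<forall>i. i \<notin> \<Gamma> \<longrightarrow> a i = 0) \<and> (\<Sum>i\<in>\<Gamma>. a i) = 0}"

definition kappa :: "'i set \<Rightarrow> ('i \<Rightarrow> 'r::ring) \<Rightarrow> 'r \<Rightarrow> nat" where
  "kappa \<Gamma> a \<alpha> = card {i\<in>\<Gamma>. a i = \<alpha>}"

definition spc_code_k :: "'i set \<Rightarrow> ('r::ring \<Rightarrow> nat) \<Rightarrow> ('i \<Rightarrow> 'r) set" where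
  "spc_code_k \<Gamma> k = {a\<in>spc_code \<Gamma>. \<forall>\<alpha>. \<alpha> \<noteq> 0 \<longrightarrow> kappa \<Gamma> a \<alpha> = k \<alpha>}"

end

theory Submission
  imports Defs
begin

lemma hall:
  assumes "finite I"
  shows "\<forall>A. (\<forall>i\<in>I. finite (A i)) \<longrightarrow> (\<forall>J\<subseteq>I. card J \<le> card (\<Union>(A ` J)))
          \<longrightarrow> (\<exists>f. inj_on f I \<and> (\<forall>i\<in>I. f i \<in> A i))"
  using assms
proof (induction I rule: finite_psubset_induct)
  case (psubset I)
  show ?case
  proof (intro allI impI)
    fix A :: "'a \<Rightarrow> 'b set"
    assume fin: "\<forall>i\<in>I. finite (A i)" and H: "\<forall>J\<subseteq>I. card J \<le> card (\<Union>(A ` J))"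
    show "\<exists>f. inj_on f I \<and> (\<forall>i\<in>I. f i \<in> A i)"
    proof (cases "I = {}")
      case True then show ?thesis by auto
    next
      case Ine: False
      show ?thesis
      proof (cases "\<exists>J. J \<subset> I \<and> J \<noteq> {} \<and> card (\<Union>(A ` J)) = card J")
        case True
        then obtain J where J: "J \<subset> I" "J \<noteq> {}" "card (\<Union>(A ` J)) = card J" by blast
        define U where "U = \<Union>(A ` J)"
        have finJ: "finite J" using J(1) psubset.hyps rev_finite_subset by blast
        have finU: "finite U" unfolding U_def using fin J(1) finJ by auto
        obtain f1 where f1: "inj_on f1 J" "\<forall>i\<in>J. f1 i \<in> A i"
          using psubset.IH[OF J(1), rule_format, of A] fin H J(1) by auto
        define A' where "A' i = A i - U" for i
        have IJ: "I - J \<subset> I" using J by blast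
        have H': "\<forall>K\<subseteq>I - J. card K \<le> card (\<Union>(A' ` K))"
        proof (intro allI impI)
          fix K assume K: "K \<subseteq> I - J"
          have finK: "finite K" using K psubset.hyps rev_finite_subset by blast
          have eq: "\<Union>(A ` (K \<union> J)) = \<Union>(A' ` K) \<union> U" unfolding A'_def U_def by auto
          have disj: "\<Union>(A' ` K) \<inter> U = {}" unfolding A'_def by auto
          have finA': "finite (\<Union>(A' ` K))" unfolding A'_def using fin K finK by auto
          have "card (K \<union> J) \<le> card (\<Union>(A ` (K \<union> J)))" using H[rule_format, of "K \<union> J"] K J(1) by auto
          also have "\<dots> = card (\<Union>(A' ` K)) + card U" using eq disj finA' finU card_Un_disjoint by metis
          finally have "card (K \<union> J) \<le> card (\<Union>(A' ` K)) + card U" .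
          moreover have "card (K \<union> J) = card K + card J" using K finK finJ card_Un_disjoint by blast
          ultimately show "card K \<le> card (\<Union>(A' ` K))" using J(3) U_def by simp
        qed
        obtain f2 where f2: "inj_on f2 (I - J)" "\<forall>i\<in>I - J. f2 i \<in> A' i"
          using psubset.IH[OF IJ, rule_format, of A'] fin H' unfolding A'_def by auto
        define f where "f i = (if i \<in> J then f1 i else f2 i)" for i
        have "inj_on f I"
          unfolding inj_on_def
        proof (intro ballI impI)
          fix i j assume ij: "i \<in> I" "j \<in> I" "f i = f j"
          show "i = j"
          proof (cases "i \<in> J"; cases "j \<in> J")
            assume "i \<in> J" "j \<in> J" then show ?thesis using ij f1 unfolding f_def inj_on_def by auto
          next
            assume a: "i \<in> J" "j \<notin> J"
            then have "f i \<in> U" using f1 unfolding f_def U_def by auto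
            moreover have "f j \<notin> U" using a ij(1,2) f2(2) unfolding f_def A'_def by auto
            ultimately show ?thesis using ij by auto
          next
            assume a: "i \<notin> J" "j \<in> J"
            then have "f j \<in> U" using f1 unfolding f_def U_def by auto
            moreover have "f i \<notin> U" using a ij(1,2) f2(2) unfolding f_def A'_def by auto
            ultimately show ?thesis using ij by auto
          next
            assume "i \<notin> J" "j \<notin> J" then show ?thesis using ij f2 unfolding f_def inj_on_def by auto
          qed
        qed
        moreover have "\<forall>i\<in>I. f i \<in> A i" using f1 f2 unfolding f_def A'_def by auto
        ultimately show ?thesis by blast
      next
        case False
        then have strict: "\<And>J. J \<subset> I \<Longrightarrow> J \<noteq> {} \<Longrightarrow> card J < card (\<Union>(A ` J))"
          using H by (metis le_neq_implies_less psubset_imp_subset)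
        obtain i0 where i0: "i0 \<in> I" using Ine by blast
        have "1 \<le> card (A i0)" using H[rule_format, of "{i0}"] i0 by auto
        then obtain x where x: "x \<in> A i0" by (metis card.empty ex_in_conv not_one_le_zero)
        define A' where "A' i = A i - {x}" for i
        have II: "I - {i0} \<subset> I" using i0 by blast
        have H': "\<forall>K\<subseteq>I - {i0}. card K \<le> card (\<Union>(A' ` K))"
        proof (intro allI impI)
          fix K assume K: "K \<subseteq> I - {i0}"
          show "card K \<le> card (\<Union>(A' ` K))"
          proof (cases "K = {}")
            case True then show ?thesis by simp
          next
            case False
            have finK: "finite K" using K psubset.hyps rev_finite_subset by blast
            have c1: "card K < card (\<Union>(A ` K))" using strict[of K] K False i0 by blast
            have eq: "\<Union>(A' ` K) = \<Union>(A ` K) - {x}" unfolding A'_def by auto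
            have c2: "card (\<Union>(A ` K)) - card {x} \<le> card (\<Union>(A ` K) - {x})"
              by (rule diff_card_le_card_Diff) simp
            have c3: "card {x} = 1" by simp
            show ?thesis using c1 c2 c3 unfolding eq by linarith
          qed
        qed
        obtain f2 where f2: "inj_on f2 (I - {i0})" "\<forall>i\<in>I - {i0}. f2 i \<in> A' i"
          using psubset.IH[OF II, rule_format, of A'] fin H' unfolding A'_def by auto
        define f where "f = f2(i0 := x)"
        have Ieq: "I = insert i0 (I - {i0})" using i0 by blast
        have xn: "x \<notin> f2 ` (I - {i0})" using f2(2) unfolding A'_def by auto
        have "inj_on f (I - {i0})" unfolding f_def
          using f2(1) by (simp add: inj_on_def)
        moreover have "f i0 \<notin> f ` (I - {i0} - {i0})" unfolding f_def using xn by auto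
        ultimately have J: "inj_on f (insert i0 (I - {i0}))" by (simp only: inj_on_insert) blast
        have "inj_on f I" by (subst Ieq) (rule J)
        moreover have "\<forall>i\<in>I. f i \<in> A i" using f2 x unfolding f_def A'_def by auto
        ultimately show ?thesis by blast
      qed
    qed
  qed
qed

lemma one_step:
  fixes y :: "'s \<Rightarrow> 'p \<Rightarrow> nat" and c :: "'s \<Rightarrow> nat"
  assumes fP: "finite P" and fS: "finite S" and M: "0 < M"
    and row: "\<forall>p\<in>P. (\<Sum>s\<in>S. y s p) = M"
    and col: "\<forall>s\<in>S. (\<Sum>p\<in>P. y s p) = c s * M"
  shows "\<exists>a. (\<forall>p\<in>P. a p \<in> S \<and> 0 < y (a p) p) \<and> (\<forall>s\<in>S. card {p\<in>P. a p = s} = c s)"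
proof -
  define I where "I = Sigma S (\<lambda>s. {..<c s})"
  define A where "A = (\<lambda>(s::'s, j::nat). {p\<in>P. 0 < y s p})"
  have fI: "finite I" unfolding I_def using fS by auto
  have hallc: "\<forall>J\<subseteq>I. card J \<le> card (\<Union>(A ` J))"
  proof (intro allI impI)
    fix J assume J: "J \<subseteq> I"
    define T where "T = fst ` J"
    define N where "N = {p\<in>P. \<exists>s\<in>T. 0 < y s p}"
    have TS: "T \<subseteq> S" using J unfolding T_def I_def by auto
    have fT: "finite T" using TS fS rev_finite_subset by blast
    have fN: "finite N" unfolding N_def using fP by auto
    have "J \<subseteq> Sigma T (\<lambda>s. {..<c s})" using J unfolding T_def I_def by force
    then have "card J \<le> card (Sigma T (\<lambda>s. {..<c s}))"
      by (rule card_mono[rotated]) (use fT in auto)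
    also have "\<dots> = (\<Sum>s\<in>T. c s)" using fT by (simp add: card_SigmaI)
    finally have c1: "card J \<le> (\<Sum>s\<in>T. c s)" .
    have UN: "\<Union>(A ` J) = N" unfolding A_def N_def T_def by force
    have "(\<Sum>s\<in>T. c s) * M = (\<Sum>s\<in>T. \<Sum>p\<in>P. y s p)"
      using col TS by (simp add: sum_distrib_right subset_iff)
    also have "\<dots> = (\<Sum>s\<in>T. \<Sum>p\<in>N. y s p)"
    proof (rule sum.cong[OF refl])
      fix s assume s: "s \<in> T"
      show "(\<Sum>p\<in>P. y s p) = (\<Sum>p\<in>N. y s p)"
        by (rule sum.mono_neutral_right) (use fP s in \<open>fastforce simp: N_def\<close>)+
    qed
    also have "\<dots> = (\<Sum>p\<in>N. \<Sum>s\<in>T. y s p)" by (rule sum.swap)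
    also have "\<dots> \<le> (\<Sum>p\<in>N. \<Sum>s\<in>S. y s p)"
      by (rule sum_mono, rule sum_mono2) (use fS TS in auto)
    also have "\<dots> = card N * M" using row unfolding N_def by simp
    finally have "(\<Sum>s\<in>T. c s) \<le> card N" using M by simp
    then show "card J \<le> card (\<Union>(A ` J))" using c1 UN by simp
  qed
  have finA: "\<forall>i\<in>I. finite (A i)" unfolding A_def using fP by auto
  obtain f where f: "inj_on f I" "\<forall>i\<in>I. f i \<in> A i"
    using hall[OF fI] finA hallc by blast
  have fIP: "f ` I \<subseteq> P" using f(2) unfolding A_def by auto
  have "(\<Sum>s\<in>S. c s) * M = (\<Sum>s\<in>S. \<Sum>p\<in>P. y s p)"
    using col by (simp add: sum_distrib_right)
  also have "\<dots> = (\<Sum>p\<in>P. \<Sum>s\<in>S. y s p)" by (rule sum.swap)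
  also have "\<dots> = card P * M" using row by simp
  finally have "(\<Sum>s\<in>S. c s) = card P" using M by simp
  then have cI: "card I = card P" unfolding I_def using fS by (simp add: card_SigmaI)
  have fI_eq: "f ` I = P"
    using card_subset_eq[OF fP fIP] card_image[OF f(1)] cI by simp
  define g where "g = the_inv_into I f"
  have g1: "\<And>p. p \<in> P \<Longrightarrow> g p \<in> I \<and> f (g p) = p"
    unfolding g_def using fI_eq f(1) the_inv_into_into f_the_inv_into_f
    by (metis order_refl)
  define a where "a p = fst (g p)" for p
  have "\<forall>p\<in>P. a p \<in> S \<and> 0 < y (a p) p"
  proof
    fix p assume p: "p \<in> P"
    have "g p \<in> I" "f (g p) = p" using g1[OF p] by auto
    then show "a p \<in> S \<and> 0 < y (a p) p"
      using f(2) unfolding a_def I_def A_def by (auto split: prod.splits)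
  qed
  moreover have "\<forall>s\<in>S. card {p\<in>P. a p = s} = c s"
  proof
    fix s assume s: "s \<in> S"
    have sub: "{s} \<times> {..<c s} \<subseteq> I" using s unfolding I_def by auto
    have "{p\<in>P. a p = s} = f ` ({s} \<times> {..<c s})"
    proof
      show "{p\<in>P. a p = s} \<subseteq> f ` ({s} \<times> {..<c s})"
      proof
        fix p assume p: "p \<in> {p\<in>P. a p = s}"
        then have "g p \<in> I" "f (g p) = p" "fst (g p) = s" using g1 unfolding a_def by auto
        then have "g p \<in> {s} \<times> {..<c s}" unfolding I_def by auto
        then show "p \<in> f ` ({s} \<times> {..<c s})" using \<open>f (g p) = p\<close> by force
      qed
    next
      show "f ` ({s} \<times> {..<c s}) \<subseteq> {p\<in>P. a p = s}"
      proof
        fix p assume "p \<in> f ` ({s} \<times> {..<c s})"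
        then obtain i where i: "i \<in> {s} \<times> {..<c s}" "p = f i" by blast
        have "i \<in> I" using i sub by auto
        then have "g p = i" unfolding g_def using i(2) the_inv_into_f_f[OF f(1)] by simp
        moreover have "p \<in> P" using \<open>i \<in> I\<close> i fIP by auto
        ultimately show "p \<in> {p\<in>P. a p = s}" using i unfolding a_def by auto
      qed
    qed
    also have "card \<dots> = card ({s} \<times> {..<c s})"
      by (rule card_image) (rule inj_on_subset[OF f(1) sub])
    also have "\<dots> = c s" by simp
    finally show "card {p\<in>P. a p = s} = c s" .
  qed
  ultimately show ?thesis by blast
qed

lemma decomp:
  fixes c :: "'s \<Rightarrow> nat"
  assumes fP: "finite P" and fS: "finite S"
  shows "\<forall>y::'s \<Rightarrow> 'p \<Rightarrow> nat. (\<forall>p\<in>P. (\<Sum>s\<in>S. y s p) = M) \<longrightarrow> (\<forall>s\<in>S. (\<Sum>p\<in>P. y s p) = c s * M) \<longrightarrow>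
    (\<exists>as. length as = M \<and> (\<forall>a\<in>set as. (\<forall>p\<in>P. a p \<in> S) \<and> (\<forall>s\<in>S. card {p\<in>P. a p = s} = c s))
         \<and> (\<forall>s\<in>S. \<forall>p\<in>P. y s p = length (filter (\<lambda>a. a p = s) as)))"
proof (induction M)
  case 0
  show ?case
  proof (intro allI impI)
    fix y :: "'s \<Rightarrow> 'p \<Rightarrow> nat"
    assume row: "\<forall>p\<in>P. (\<Sum>s\<in>S. y s p) = 0"
    then have "\<forall>s\<in>S. \<forall>p\<in>P. y s p = 0" using fS by simp
    then show "\<exists>as. length as = 0 \<and> (\<forall>a\<in>set as. (\<forall>p\<in>P. a p \<in> S) \<and> (\<forall>s\<in>S. card {p\<in>P. a p = s} = c s))
         \<and> (\<forall>s\<in>S. \<forall>p\<in>P. y s p = length (filter (\<lambda>a. a p = s) as))"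
      by (intro exI[of _ "[]"]) simp
  qed
next
  case (Suc m)
  show ?case
  proof (intro allI impI)
    fix y :: "'s \<Rightarrow> 'p \<Rightarrow> nat"
    assume row: "\<forall>p\<in>P. (\<Sum>s\<in>S. y s p) = Suc m"
      and col: "\<forall>s\<in>S. (\<Sum>p\<in>P. y s p) = c s * Suc m"
    obtain a where a1: "\<forall>p\<in>P. a p \<in> S \<and> 0 < y (a p) p"
      and a2: "\<forall>s\<in>S. card {p\<in>P. a p = s} = c s"
      using one_step[OF fP fS _ row col] by blast
    define y' where "y' s p = y s p - (if a p = s then 1 else 0)" for s p
    have yy: "\<And>s p. p \<in> P \<Longrightarrow> y s p = y' s p + (if a p = s then 1 else 0)"
      using a1 unfolding y'_def by fastforce
    have row': "\<forall>p\<in>P. (\<Sum>s\<in>S. y' s p) = m"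
    proof
      fix p assume p: "p \<in> P"
      have "Suc m = (\<Sum>s\<in>S. y' s p + (if a p = s then 1 else 0))"
        using row p yy by (metis (no_types, lifting) sum.cong)
      also have "\<dots> = (\<Sum>s\<in>S. y' s p) + 1"
        using a1 p fS by (simp add: sum.distrib)
      finally show "(\<Sum>s\<in>S. y' s p) = m" by simp
    qed
    have col': "\<forall>s\<in>S. (\<Sum>p\<in>P. y' s p) = c s * m"
    proof
      fix s assume s: "s \<in> S"
      have "c s * Suc m = (\<Sum>p\<in>P. y' s p + (if a p = s then 1 else 0))"
        using col s yy by (metis (no_types, lifting) sum.cong)
      also have "\<dots> = (\<Sum>p\<in>P. y' s p) + card {p\<in>P. a p = s}"
        using fP by (simp add: sum.distrib sum.If_cases Int_def)
      finally show "(\<Sum>p\<in>P. y' s p) = c s * m" using a2 s by simp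
    qed
    obtain as where as: "length as = m" "\<forall>a\<in>set as. (\<forall>p\<in>P. a p \<in> S) \<and> (\<forall>s\<in>S. card {p\<in>P. a p = s} = c s)"
      "\<forall>s\<in>S. \<forall>p\<in>P. y' s p = length (filter (\<lambda>a. a p = s) as)"
      using Suc.IH row' col' by blast
    show "\<exists>as. length as = Suc m \<and> (\<forall>a\<in>set as. (\<forall>p\<in>P. a p \<in> S) \<and> (\<forall>s\<in>S. card {p\<in>P. a p = s} = c s))
         \<and> (\<forall>s\<in>S. \<forall>p\<in>P. y s p = length (filter (\<lambda>a. a p = s) as))"
      using as a1 a2 yy by (intro exI[of _ "a # as"]) auto
  qed
qed

lemma count_list_filter: "P b \<Longrightarrow> count_list (filter P xs) b = count_list xs b"
  by (induction xs) auto

lemma rmul_card: "finite A \<Longrightarrow> (\<Sum>x\<in>A. \<alpha>) = rmul \<alpha> (card A)"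
proof (induction A rule: finite_induct)
  case empty then show ?case by (simp add: rmul_def)
next
  case (insert a A) then show ?case by (simp add: rmul_def add.commute)
qed

theorem proposition1:
  fixes \<Gamma> :: "'i set" and M :: nat
    and k :: "'r::{ring,finite} \<Rightarrow> nat"
    and x :: "'r \<Rightarrow> 'i \<Rightarrow> nat"
  assumes "finite \<Gamma>"
    and "(\<Sum>\<alpha>\<in>UNIV - {0}. rmul \<alpha> (k \<alpha>)) = 0"
    and "(\<Sum>\<alpha>\<in>UNIV - {0}. k \<alpha>) \<le> card \<Gamma>"
    and "\<And>\<alpha>. \<alpha> \<noteq> 0 \<Longrightarrow> (\<Sum>i\<in>\<Gamma>. x \<alpha> i) = k \<alpha> * M"
    and "\<And>i. i \<in> \<Gamma> \<Longrightarrow> (\<Sum>\<alpha>\<in>UNIV - {0}. x \<alpha> i) \<le> M"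
  shows "\<exists>w :: ('i \<Rightarrow> 'r) \<Rightarrow> nat.
           (\<Sum>a\<in>spc_code_k \<Gamma> k. w a) = M \<and>
           (\<forall>\<alpha>. \<alpha> \<noteq> 0 \<longrightarrow> (\<forall>i\<in>\<Gamma>.
              x \<alpha> i = (\<Sum>a\<in>{a\<in>spc_code_k \<Gamma> k. a i = \<alpha>}. w a)))"
proof -
  note fG = assms(1)
  define K where "K = (\<Sum>\<alpha>\<in>UNIV - {0::'r}. k \<alpha>)"
  define X where "X i = (\<Sum>\<alpha>\<in>UNIV - {0::'r}. x \<alpha> i)" for i
  define c where "c \<alpha> = (if \<alpha> = 0 then card \<Gamma> - K else k \<alpha>)" for \<alpha> :: 'r
  define y where "y \<alpha> i = (if \<alpha> = 0 then M - X i else x \<alpha> i)" for \<alpha> :: 'r and i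
  have fU: "finite (UNIV :: 'r set)" by simp
  have row: "\<forall>i\<in>\<Gamma>. (\<Sum>\<alpha>\<in>UNIV. y \<alpha> i) = M"
  proof
    fix i assume i: "i \<in> \<Gamma>"
    have "(\<Sum>\<alpha>\<in>UNIV. y \<alpha> i) = y 0 i + (\<Sum>\<alpha>\<in>UNIV - {0}. y \<alpha> i)"
      by (rule sum.remove) auto
    also have "(\<Sum>\<alpha>\<in>UNIV - {0}. y \<alpha> i) = X i" unfolding X_def y_def by (rule sum.cong) auto
    finally show "(\<Sum>\<alpha>\<in>UNIV. y \<alpha> i) = M" using assms(5)[OF i] unfolding y_def X_def by simp
  qed
  have sumX: "(\<Sum>i\<in>\<Gamma>. X i) = K * M"
  proof -
    have "(\<Sum>i\<in>\<Gamma>. X i) = (\<Sum>\<alpha>\<in>UNIV - {0}. \<Sum>i\<in>\<Gamma>. x \<alpha> i)"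
      unfolding X_def by (rule sum.swap)
    also have "\<dots> = (\<Sum>\<alpha>\<in>UNIV - {0}. k \<alpha> * M)" by (rule sum.cong) (auto simp: assms(4))
    finally show ?thesis unfolding K_def by (simp add: sum_distrib_right)
  qed
  have col: "\<forall>\<alpha>\<in>UNIV. (\<Sum>i\<in>\<Gamma>. y \<alpha> i) = c \<alpha> * M"
  proof
    fix \<alpha> :: 'r
    show "(\<Sum>i\<in>\<Gamma>. y \<alpha> i) = c \<alpha> * M"
    proof (cases "\<alpha> = 0")
      case True
      have "(\<Sum>i\<in>\<Gamma>. (M - X i)) + (\<Sum>i\<in>\<Gamma>. X i) = (\<Sum>i\<in>\<Gamma>. (M - X i) + X i)"
        by (simp add: sum.distrib)
      also have "\<dots> = card \<Gamma> * M" using assms(5) unfolding X_def by simp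
      finally have "(\<Sum>i\<in>\<Gamma>. (M - X i)) = card \<Gamma> * M - K * M" using sumX by simp
      then show ?thesis using True unfolding y_def c_def by (simp add: diff_mult_distrib)
    next
      case False
      then show ?thesis unfolding y_def c_def using assms(4) by simp
    qed
  qed
  obtain as where as: "length as = M"
    "\<forall>a\<in>set as. (\<forall>p\<in>\<Gamma>. a p \<in> UNIV) \<and> (\<forall>s\<in>UNIV. card {p\<in>\<Gamma>. a p = s} = c s)"
    "\<forall>s\<in>UNIV. \<forall>p\<in>\<Gamma>. y s p = length (filter (\<lambda>a. a p = s) as)"
    using decomp[OF fG fU, of M c] row col by blast
  define nrm where "nrm a = (\<lambda>i. if i \<in> \<Gamma> then a i else (0::'r))" for a :: "'i \<Rightarrow> 'r"
  define bs where "bs = map nrm as"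
  define C where "C = spc_code_k \<Gamma> k"
  have finC: "finite C"
  proof (rule finite_subset)
    show "C \<subseteq> {f. \<forall>x. (x \<in> \<Gamma> \<longrightarrow> f x \<in> UNIV) \<and> (x \<notin> \<Gamma> \<longrightarrow> f x = 0)}"
      unfolding C_def spc_code_k_def spc_code_def by auto
    show "finite {f. \<forall>x. (x \<in> \<Gamma> \<longrightarrow> f x \<in> (UNIV::'r set)) \<and> (x \<notin> \<Gamma> \<longrightarrow> f x = 0)}"
      by (rule finite_set_of_finite_funs) (use fG in auto)
  qed
  have inC: "set bs \<subseteq> C"
  proof
    fix b assume "b \<in> set bs"
    then obtain a where a: "a \<in> set as" "b = nrm a" unfolding bs_def by auto
    have cnt: "\<And>\<alpha>. card {i\<in>\<Gamma>. a i = \<alpha>} = c \<alpha>" using as(2) a(1) by auto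
    have eqs: "\<And>\<alpha>. {i\<in>\<Gamma>. b i = \<alpha>} = {i\<in>\<Gamma>. a i = \<alpha>}" unfolding a(2) nrm_def by auto
    have "(\<Sum>i\<in>\<Gamma>. b i) = (\<Sum>i\<in>\<Gamma>. a i)" unfolding a(2) nrm_def by simp
    also have "\<dots> = (\<Sum>\<alpha>\<in>UNIV. \<Sum>i\<in>{i\<in>\<Gamma>. a i = \<alpha>}. a i)"
      by (rule sum.group[symmetric]) (use fG in auto)
    also have "\<dots> = (\<Sum>\<alpha>\<in>UNIV. rmul \<alpha> (c \<alpha>))"
    proof (rule sum.cong[OF refl])
      fix \<alpha> :: 'r
      have "(\<Sum>i\<in>{i\<in>\<Gamma>. a i = \<alpha>}. a i) = (\<Sum>i\<in>{i\<in>\<Gamma>. a i = \<alpha>}. \<alpha>)" by (rule sum.cong) auto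
      then show "(\<Sum>i\<in>{i\<in>\<Gamma>. a i = \<alpha>}. a i) = rmul \<alpha> (c \<alpha>)" using cnt rmul_card[of "{i\<in>\<Gamma>. a i = \<alpha>}" \<alpha>] fG by simp
    qed
    also have "\<dots> = rmul 0 (c 0) + (\<Sum>\<alpha>\<in>UNIV - {0}. rmul \<alpha> (c \<alpha>))"
      by (rule sum.remove) auto
    also have "\<dots> = (\<Sum>\<alpha>\<in>UNIV - {0}. rmul \<alpha> (k \<alpha>))"
      by (simp add: rmul_def c_def)
    also have "\<dots> = 0" by (rule assms(2))
    finally have s0: "(\<Sum>i\<in>\<Gamma>. b i) = 0" .
    have z: "\<forall>i. i \<notin> \<Gamma> \<longrightarrow> b i = 0" unfolding a(2) nrm_def by simp
    have kap: "\<forall>\<alpha>. \<alpha> \<noteq> 0 \<longrightarrow> kappa \<Gamma> b \<alpha> = k \<alpha>"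
      unfolding kappa_def eqs using cnt c_def by simp
    show "b \<in> C" unfolding C_def spc_code_k_def spc_code_def using s0 z kap by auto
  qed
  have len: "length bs = M" unfolding bs_def using as(1) by simp
  show ?thesis
  proof (intro exI[of _ "count_list bs"] conjI allI impI ballI)
    show "(\<Sum>a\<in>spc_code_k \<Gamma> k. count_list bs a) = M"
      using sum_count_set[OF inC finC] len unfolding C_def by simp
  next
    fix \<alpha> :: 'r and i assume \<alpha>: "\<alpha> \<noteq> 0" and i: "i \<in> \<Gamma>"
    have sub: "set (filter (\<lambda>b. b i = \<alpha>) bs) \<subseteq> {a\<in>C. a i = \<alpha>}" using inC by auto
    have fin2: "finite {a\<in>C. a i = \<alpha>}" using finC by simp
    have "(\<Sum>a\<in>{a\<in>C. a i = \<alpha>}. count_list bs a) = (\<Sum>a\<in>{a\<in>C. a i = \<alpha>}. count_list (filter (\<lambda>b. b i = \<alpha>) bs) a)"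
      by (rule sum.cong) (auto simp: count_list_filter)
    also have "\<dots> = length (filter (\<lambda>b. b i = \<alpha>) bs)" by (rule sum_count_set[OF sub fin2])
    also have "\<dots> = length (filter (\<lambda>a. a i = \<alpha>) as)"
      unfolding bs_def filter_map length_map
      by (rule arg_cong[where f = length], rule filter_cong) (use i in \<open>auto simp: nrm_def\<close>)
    also have "\<dots> = y \<alpha> i" using as(3) i by simp
    also have "\<dots> = x \<alpha> i" unfolding y_def using \<alpha> by simp
    finally show "x \<alpha> i = (\<Sum>a\<in>{a\<in>spc_code_k \<Gamma> k. a i = \<alpha>}. count_list bs a)" unfolding C_def by simp
  qed
qed

end
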